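(* Let $j,k$ be two settings. For each $i\in\{j,k\}$ suppose $Y^i = \theta^i D^i + f^i(X^i,A^i) + \varepsilon^i$ with $E[\varepsilon^i\mid D^i,X^i,A^i]=0$ (with $D^i$ a real-valued treatment, $X^i$ observed and $A^i$ unobserved covariates), let $\theta^i_s$ denote the short-regression parameter omitting $A^i$, and let $B^i = \theta^i_s - \theta^i$ be the omitted variable bias. Assume $B^i \in [\nu^i_l,\nu^i_u]$ for known constants $\nu^i_l\le\nu^i_u$, $i\in\{j,k\}$, and assume $B^j = \rho^{jk} B^k$ for some $\rho^{jk} \in [\rho^{jk}_l, \rho^{jk}_u]$ with known constants $0<\rho^{jk}_l\le 1$ and $\rho^{jk}_u \ge 1$. Let \[ \mathbb{C}^{jk} = \{(\rho^{jk}_l-1)\nu^k_l,\ (\rho^{jk}_u-1)\nu^k_l,\ (\rho^{jk}_l-1)\nu^k_u,\ (\rho^{jk}_u-1)\nu^k_u\}, \] $c^{jk}_l = \min \mathbb{C}^{jk}$, $c^{jk}_u = \max\mathbb{C}^{jk}$, and $\mathcal{I}^i = [\theta^i_s - \nu^i_u, \theta^i_s - \nu^i_l]$. Then the true pair $(\theta^j,\theta^k)$ belongs to \[ \mathcal{J}^{jk} = \{(\theta^j,\theta^k) : \theta^j\in\mathcal{I}^j,\ \theta^k\in\mathcal{I}^k,\ \theta^j-\theta^k \in \mathcal{I}^{jk}_D\}, \] where $\mathcal{I}^{jk}_D = [(\theta^j_s-\theta^k_s) - c^{jk}_u,\ (\theta^j_s-\theta^k_s) - c^{jk}_l]$.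
   Context: For a setting $i$, the long parameter is $\theta^i = E[Y^i\alpha^i]$ with $\alpha^i = (D^i - E[D^i\mid X^i,A^i])/E[(D^i - E[D^i\mid X^i,A^i])^2]$, and the short parameter is $\theta^i_s = E[Y^i\alpha^i_s]$ with $\alpha^i_s = (D^i - E[D^i\mid X^i])/E[(D^i - E[D^i\mid X^i])^2]$. The omitted variable bias is $B^i = \theta^i_s - \theta^i$. *)

theory Defs
  imports "HOL-Probability.Probability"
begin

definition gen_sigma :: "'a measure \<Rightarrow> ('a \<Rightarrow> 'b) \<Rightarrow> 'b measure \<Rightarrow> 'a measure" where
  "gen_sigma M Z N = vimage_algebra (space M) Z N"

definition long_alpha :: "'a measure \<Rightarrow> 'x measure \<Rightarrow> 'u measure \<Rightarrow>
    ('a \<Rightarrow> real) \<Rightarrow> ('a \<Rightarrow> 'x) \<Rightarrow> ('a \<Rightarrow> 'u) \<Rightarrow> 'a \<Rightarrow> real" where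
  "long_alpha M MX MA D X A =
     (let R = (\<lambda>\<omega>. D \<omega> - real_cond_exp M (gen_sigma M (\<lambda>\<omega>. (X \<omega>, A \<omega>)) (MX \<Otimes>\<^sub>M MA)) D \<omega>)
      in (\<lambda>\<omega>. R \<omega> / (\<integral>\<omega>'. (R \<omega>')\<^sup>2 \<partial>M)))"

definition short_alpha :: "'a measure \<Rightarrow> 'x measure \<Rightarrow>
    ('a \<Rightarrow> real) \<Rightarrow> ('a \<Rightarrow> 'x) \<Rightarrow> 'a \<Rightarrow> real" where
  "short_alpha M MX D X =
     (let R = (\<lambda>\<omega>. D \<omega> - real_cond_exp M (gen_sigma M X MX) D \<omega>)
      in (\<lambda>\<omega>. R \<omega> / (\<integral>\<omega>'. (R \<omega>')\<^sup>2 \<partial>M)))"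

definition long_param :: "'a measure \<Rightarrow> 'x measure \<Rightarrow> 'u measure \<Rightarrow>
    ('a \<Rightarrow> real) \<Rightarrow> ('a \<Rightarrow> real) \<Rightarrow> ('a \<Rightarrow> 'x) \<Rightarrow> ('a \<Rightarrow> 'u) \<Rightarrow> real" where
  "long_param M MX MA Y D X A = (\<integral>\<omega>. Y \<omega> * long_alpha M MX MA D X A \<omega> \<partial>M)"

definition short_param :: "'a measure \<Rightarrow> 'x measure \<Rightarrow>
    ('a \<Rightarrow> real) \<Rightarrow> ('a \<Rightarrow> real) \<Rightarrow> ('a \<Rightarrow> 'x) \<Rightarrow> real" where
  "short_param M MX Y D X = (\<integral>\<omega>. Y \<omega> * short_alpha M MX D X \<omega> \<partial>M)"

definition ov_bias :: "'a measure \<Rightarrow> 'x measure \<Rightarrow> 'u measure \<Rightarrow>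
    ('a \<Rightarrow> real) \<Rightarrow> ('a \<Rightarrow> real) \<Rightarrow> ('a \<Rightarrow> 'x) \<Rightarrow> ('a \<Rightarrow> 'u) \<Rightarrow> real" where
  "ov_bias M MX MA Y D X A = short_param M MX Y D X - long_param M MX MA Y D X A"

definition plm_model :: "'a measure \<Rightarrow> 'x measure \<Rightarrow> 'u measure \<Rightarrow>
    ('a \<Rightarrow> real) \<Rightarrow> ('a \<Rightarrow> real) \<Rightarrow> ('a \<Rightarrow> 'x) \<Rightarrow> ('a \<Rightarrow> 'u) \<Rightarrow>
    ('x \<times> 'u \<Rightarrow> real) \<Rightarrow> ('a \<Rightarrow> real) \<Rightarrow> bool" where
  "plm_model M MX MA Y D X A f eps \<longleftrightarrow>
     prob_space M \<and>
     D \<in> borel_measurable M \<and> X \<in> M \<rightarrow>\<^sub>M MX \<and> A \<in> M \<rightarrow>\<^sub>M MA \<and>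
     f \<in> borel_measurable (MX \<Otimes>\<^sub>M MA) \<and>
     integrable M eps \<and>
     (\<forall>\<omega>\<in>space M. Y \<omega> = long_param M MX MA Y D X A * D \<omega> + f (X \<omega>, A \<omega>) + eps \<omega>) \<and>
     (AE \<omega> in M. real_cond_exp M
        (gen_sigma M (\<lambda>\<omega>. (D \<omega>, X \<omega>, A \<omega>)) (borel \<Otimes>\<^sub>M MX \<Otimes>\<^sub>M MA)) eps \<omega> = 0)"

definition Cset :: "real \<Rightarrow> real \<Rightarrow> real \<Rightarrow> real \<Rightarrow> real set" where
  "Cset rl ru nl nu = {(rl - 1) * nl, (ru - 1) * nl, (rl - 1) * nu, (ru - 1) * nu}"

definition c_low :: "real \<Rightarrow> real \<Rightarrow> real \<Rightarrow> real \<Rightarrow> real" where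
  "c_low rl ru nl nu = Min (Cset rl ru nl nu)"

definition c_up :: "real \<Rightarrow> real \<Rightarrow> real \<Rightarrow> real \<Rightarrow> real" where
  "c_up rl ru nl nu = Max (Cset rl ru nl nu)"

definition I_int :: "real \<Rightarrow> real \<Rightarrow> real \<Rightarrow> real set" where
  "I_int ts nl nu = {ts - nu .. ts - nl}"

definition ID_int :: "real \<Rightarrow> real \<Rightarrow> real \<Rightarrow> real \<Rightarrow> real \<Rightarrow> real \<Rightarrow> real set" where
  "ID_int tsj tsk rl ru nkl nku =
     {(tsj - tsk) - c_up rl ru nkl nku .. (tsj - tsk) - c_low rl ru nkl nku}"

definition J_set :: "real \<Rightarrow> real \<Rightarrow> real \<Rightarrow> real \<Rightarrow> real \<Rightarrow> real \<Rightarrow>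
    real \<Rightarrow> real \<Rightarrow> (real \<times> real) set" where
  "J_set tsj tsk njl nju nkl nku rl ru =
     {(tj, tk). tj \<in> I_int tsj njl nju \<and> tk \<in> I_int tsk nkl nku \<and>
                tj - tk \<in> ID_int tsj tsk rl ru nkl nku}"

end

theory Submission
  imports Defs
begin

lemma lin_between:
  fixes a b c x :: real
  assumes "a \<le> x" "x \<le> c"
  shows "min (a*b) (c*b) \<le> x*b \<and> x*b \<le> max (a*b) (c*b)"
proof (cases "b \<ge> 0")
  case True
  then have "a*b \<le> x*b" "x*b \<le> c*b" using assms by (auto intro: mult_right_mono)
  then show ?thesis by linarith
next
  case False
  then have "c*b \<le> x*b" "x*b \<le> a*b" using assms by (auto intro: mult_right_mono_neg)
  then show ?thesis by linarith
qed

lemma corner_bounds: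
  fixes rl ru nl nu x b :: real
  assumes "rl \<le> x" "x \<le> ru" "nl \<le> b" "b \<le> nu"
  shows "c_low rl ru nl nu \<le> (x - 1) * b \<and> (x - 1) * b \<le> c_up rl ru nl nu"
proof -
  have h1: "min ((rl-1)*b) ((ru-1)*b) \<le> (x-1)*b \<and> (x-1)*b \<le> max ((rl-1)*b) ((ru-1)*b)"
    using lin_between[of "rl-1" "x-1" "ru-1" b] assms by simp
  have h2: "min ((rl-1)*nl) ((rl-1)*nu) \<le> (rl-1)*b \<and> (rl-1)*b \<le> max ((rl-1)*nl) ((rl-1)*nu)"
    using lin_between[of nl b nu "rl-1"] assms by (simp add: mult.commute)
  have h3: "min ((ru-1)*nl) ((ru-1)*nu) \<le> (ru-1)*b \<and> (ru-1)*b \<le> max ((ru-1)*nl) ((ru-1)*nu)"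
    using lin_between[of nl b nu "ru-1"] assms by (simp add: mult.commute)
  have fin: "finite (Cset rl ru nl nu)" by (simp add: Cset_def)
  have mem: "(rl-1)*nl \<in> Cset rl ru nl nu" "(ru-1)*nl \<in> Cset rl ru nl nu"
     "(rl-1)*nu \<in> Cset rl ru nl nu" "(ru-1)*nu \<in> Cset rl ru nl nu" by (auto simp: Cset_def)
  have lo: "c_low rl ru nl nu \<le> y" if "y \<in> Cset rl ru nl nu" for y
    unfolding c_low_def using fin that by simp
  have hi: "y \<le> c_up rl ru nl nu" if "y \<in> Cset rl ru nl nu" for y
    unfolding c_up_def using fin that by simp
  show ?thesis using h1 h2 h3 lo[OF mem(1)] lo[OF mem(2)] lo[OF mem(3)] lo[OF mem(4)]
      hi[OF mem(1)] hi[OF mem(2)] hi[OF mem(3)] hi[OF mem(4)]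
    by (smt (verit))
qed

theorem proposition2:
  fixes Mj :: "'a measure" and MXj :: "'x measure" and MAj :: "'u measure"
    and Yj Dj epsj :: "'a \<Rightarrow> real" and Xj :: "'a \<Rightarrow> 'x" and Aj :: "'a \<Rightarrow> 'u"
    and fj :: "'x \<times> 'u \<Rightarrow> real"
    and Mk :: "'b measure" and MXk :: "'y measure" and MAk :: "'v measure"
    and Yk Dk epsk :: "'b \<Rightarrow> real" and Xk :: "'b \<Rightarrow> 'y" and Ak :: "'b \<Rightarrow> 'v"
    and fk :: "'y \<times> 'v \<Rightarrow> real"
    and njl nju nkl nku rho rl ru :: real
  assumes model_j: "plm_model Mj MXj MAj Yj Dj Xj Aj fj epsj"
    and model_k: "plm_model Mk MXk MAk Yk Dk Xk Ak fk epsk"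
    and nj: "njl \<le> nju" and nk: "nkl \<le> nku"
    and Bj: "ov_bias Mj MXj MAj Yj Dj Xj Aj \<in> {njl..nju}"
    and Bk: "ov_bias Mk MXk MAk Yk Dk Xk Ak \<in> {nkl..nku}"
    and rl: "0 < rl" "rl \<le> 1" and ru: "ru \<ge> 1"
    and rho: "rho \<in> {rl..ru}"
    and Bjk: "ov_bias Mj MXj MAj Yj Dj Xj Aj = rho * ov_bias Mk MXk MAk Yk Dk Xk Ak"
  shows "(long_param Mj MXj MAj Yj Dj Xj Aj, long_param Mk MXk MAk Yk Dk Xk Ak)
           \<in> J_set (short_param Mj MXj Yj Dj Xj) (short_param Mk MXk Yk Dk Xk)
                   njl nju nkl nku rl ru"
proof -
  define bj where "bj = ov_bias Mj MXj MAj Yj Dj Xj Aj"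
  define bk where "bk = ov_bias Mk MXk MAk Yk Dk Xk Ak"
  have ej: "long_param Mj MXj MAj Yj Dj Xj Aj = short_param Mj MXj Yj Dj Xj - bj"
    unfolding bj_def ov_bias_def by simp
  have ek: "long_param Mk MXk MAk Yk Dk Xk Ak = short_param Mk MXk Yk Dk Xk - bk"
    unfolding bk_def ov_bias_def by simp
  have cb: "c_low rl ru nkl nku \<le> (rho - 1) * bk \<and> (rho - 1) * bk \<le> c_up rl ru nkl nku"
    using corner_bounds[of rl rho ru nkl bk nku] rho Bk unfolding bk_def by auto
  have "bj - bk = (rho - 1) * bk" using Bjk unfolding bj_def bk_def by (simp add: algebra_simps)
  then show ?thesis
    using cb Bj Bk unfolding J_set_def I_int_def ID_int_def ej ek bj_def[symmetric] bk_def[symmetric]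
    by auto
qed

end
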